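(* The space $L_\infty[0,1]$ fails the UALS property.
   Context: A Banach space $X$ satisfies the UALS property if there exists $C>0$ such that for every convex norm-compact $W\subset\mathcal{L}(X)$, every $A\in\mathcal{L}(X)$ and $\varepsilon>0$ such that for every $x$ in the unit ball of $X$ there is $B\in W$ with $\|A(x)-B(x)\|\le\varepsilon$, there exist a closed finite-codimensional subspace $Y$ of $X$ and $B\in W$ with $\|(A-B)|_Y\|_{\mathcal{L}(Y,X)}\le C\varepsilon$. *)

theory Defs
  imports "HOL-Probability.Probability"
begin

section \<open>The space L_infinity[0,1]\<close>

abbreviation M01 :: "real measure" where
  "M01 \<equiv> lebesgue_on {0..1::real}"

definition Linf_fun :: "(real \<Rightarrow> real) set" where
  "Linf_fun = {f. f \<in> borel_measurable M01 \<and> (\<exists>C. AE x in M01. \<bar>f x\<bar> \<le> C)}"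

definition Linf_rel :: "(real \<Rightarrow> real) \<Rightarrow> (real \<Rightarrow> real) \<Rightarrow> bool" where
  "Linf_rel f g \<longleftrightarrow> f \<in> Linf_fun \<and> g \<in> Linf_fun \<and> (AE x in M01. f x = g x)"

lemma zero_Linf_fun: "(\<lambda>x. 0) \<in> Linf_fun"
  unfolding Linf_fun_def by auto

lemma add_Linf_fun: "f \<in> Linf_fun \<Longrightarrow> g \<in> Linf_fun \<Longrightarrow> (\<lambda>x. f x + g x) \<in> Linf_fun"
  unfolding Linf_fun_def
proof (safe, goal_cases)
  case (1 C D)
  then show ?case by auto
next
  case (2 C D)
  then show ?case by (intro exI[of _ "C + D"]) (auto elim!: eventually_elim2)
qed

lemma scale_Linf_fun: "f \<in> Linf_fun \<Longrightarrow> (\<lambda>x. c * f x) \<in> Linf_fun"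
  unfolding Linf_fun_def
proof (safe, goal_cases)
  case (1 C)
  then show ?case by auto
next
  case (2 C)
  then show ?case
    by (intro exI[of _ "\<bar>c\<bar> * C"]) (auto simp: abs_mult intro: mult_left_mono elim!: eventually_mono)
qed

lemma uminus_Linf_fun: "f \<in> Linf_fun \<Longrightarrow> (\<lambda>x. - f x) \<in> Linf_fun"
  using scale_Linf_fun[of f "-1"] by simp

lemma diff_Linf_fun: "f \<in> Linf_fun \<Longrightarrow> g \<in> Linf_fun \<Longrightarrow> (\<lambda>x. f x - g x) \<in> Linf_fun"
  using add_Linf_fun[OF _ uminus_Linf_fun, of f g] by simp

lemma part_equivp_Linf_rel: "part_equivp Linf_rel"
proof (rule part_equivpI)
  show "\<exists>x. Linf_rel x x" using zero_Linf_fun by (auto simp: Linf_rel_def)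
  show "symp Linf_rel" unfolding symp_def Linf_rel_def by (auto elim!: eventually_mono)
  show "transp Linf_rel" unfolding transp_def Linf_rel_def by (auto elim!: eventually_elim2)
qed

quotient_type Linf01 = "real \<Rightarrow> real" / partial: Linf_rel
  by (rule part_equivp_Linf_rel)

definition Linf_norm :: "(real \<Rightarrow> real) \<Rightarrow> real" where
  "Linf_norm f = real_of_ereal (esssup M01 (\<lambda>x. ereal \<bar>f x\<bar>))"

lemma M01_space_measure: "emeasure M01 (space M01) = 1"
  by (simp add: emeasure_restrict_space)

lemma AE_M01_nontriv: "\<not> (AE x in M01. False)"
  using M01_space_measure by (simp add: eventually_False ae_filter_eq_bot_iff)

lemma esssup_Linf_bounds:
  assumes "f \<in> Linf_fun"
  shows "esssup M01 (\<lambda>x. ereal \<bar>f x\<bar>) \<noteq> \<infinity>"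
    and "esssup M01 (\<lambda>x. ereal \<bar>f x\<bar>) \<ge> 0"
    and "AE x in M01. \<bar>f x\<bar> \<le> Linf_norm f"
proof -
  from assms obtain C where f: "f \<in> borel_measurable M01" and C: "AE x in M01. \<bar>f x\<bar> \<le> C"
    unfolding Linf_fun_def by auto
  have m: "(\<lambda>x. ereal \<bar>f x\<bar>) \<in> borel_measurable M01" using f by measurable
  have "esssup M01 (\<lambda>x. ereal \<bar>f x\<bar>) \<le> ereal C"
    by (rule esssup_I[OF m]) (use C in \<open>auto elim!: eventually_mono\<close>)
  then show 1: "esssup M01 (\<lambda>x. ereal \<bar>f x\<bar>) \<noteq> \<infinity>" by auto
  have A: "AE x in M01. ereal \<bar>f x\<bar> \<le> esssup M01 (\<lambda>x. ereal \<bar>f x\<bar>)" by (rule esssup_AE)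
  show 2: "esssup M01 (\<lambda>x. ereal \<bar>f x\<bar>) \<ge> 0"
  proof (rule ccontr)
    assume neg: "\<not> ?thesis"
    have "AE x in M01. False" using A
    proof eventually_elim
      case (elim x)
      have "0 \<le> ereal \<bar>f x\<bar>" by simp
      then show False using elim neg order_trans by blast
    qed
    then show False using AE_M01_nontriv by simp
  qed
  define e where "e = esssup M01 (\<lambda>x. ereal \<bar>f x\<bar>)"
  have fin: "ereal (real_of_ereal e) = e" using 1 2 unfolding e_def by (intro ereal_real') auto
  show "AE x in M01. \<bar>f x\<bar> \<le> Linf_norm f"
    using A unfolding Linf_norm_def e_def[symmetric]
  proof eventually_elim
    case (elim x)
    then have "ereal \<bar>f x\<bar> \<le> ereal (real_of_ereal e)" using fin by simp
    then show ?case by simp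
  qed
qed

lemma Linf_norm_nonneg: "f \<in> Linf_fun \<Longrightarrow> Linf_norm f \<ge> 0"
  using esssup_Linf_bounds(2)[of f] unfolding Linf_norm_def by (simp add: real_of_ereal_pos)

lemma Linf_norm_le:
  assumes f: "f \<in> Linf_fun" and c: "AE x in M01. \<bar>f x\<bar> \<le> c"
  shows "Linf_norm f \<le> c"
proof -
  have m: "(\<lambda>x. ereal \<bar>f x\<bar>) \<in> borel_measurable M01" using f unfolding Linf_fun_def by auto
  have "esssup M01 (\<lambda>x. ereal \<bar>f x\<bar>) \<le> ereal c"
    by (rule esssup_I[OF m]) (use c in \<open>auto elim!: eventually_mono\<close>)
  moreover have "esssup M01 (\<lambda>x. ereal \<bar>f x\<bar>) \<ge> 0" by (rule esssup_Linf_bounds(2)[OF f])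
  ultimately show ?thesis unfolding Linf_norm_def
    by (cases "esssup M01 (\<lambda>x. ereal \<bar>f x\<bar>)") auto
qed

lemma Linf_fun_ereal_meas: "f \<in> Linf_fun \<Longrightarrow> (\<lambda>x. ereal \<bar>f x\<bar>) \<in> borel_measurable M01"
  unfolding Linf_fun_def by auto

lemma Linf_norm_cong: "Linf_rel f g \<Longrightarrow> Linf_norm f = Linf_norm g"
  unfolding Linf_norm_def Linf_rel_def
  by (auto intro!: arg_cong[where f=real_of_ereal] esssup_AE_cong Linf_fun_ereal_meas elim!: eventually_mono)

lemma Linf_norm_triangle:
  assumes f: "f \<in> Linf_fun" and g: "g \<in> Linf_fun"
  shows "Linf_norm (\<lambda>x. f x + g x) \<le> Linf_norm f + Linf_norm g"
  using esssup_Linf_bounds(3)[OF f] esssup_Linf_bounds(3)[OF g]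
  by (intro Linf_norm_le add_Linf_fun f g) (auto elim!: eventually_elim2)

lemma Linf_norm_scale_le:
  assumes f: "f \<in> Linf_fun"
  shows "Linf_norm (\<lambda>x. c * f x) \<le> \<bar>c\<bar> * Linf_norm f"
  using esssup_Linf_bounds(3)[OF f]
  by (intro Linf_norm_le scale_Linf_fun f)
     (auto simp: abs_mult intro: mult_left_mono elim!: eventually_mono)

lemma Linf_norm_scale:
  assumes f: "f \<in> Linf_fun"
  shows "Linf_norm (\<lambda>x. c * f x) = \<bar>c\<bar> * Linf_norm f"
proof (cases "c = 0")
  case True
  then show ?thesis using Linf_norm_scale_le[OF f, of 0] Linf_norm_nonneg[OF zero_Linf_fun] by simp
next
  case False
  have "Linf_norm f = Linf_norm (\<lambda>x. (1/c) * (c * f x))" using False by simp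
  also have "\<dots> \<le> \<bar>1/c\<bar> * Linf_norm (\<lambda>x. c * f x)"
    by (rule Linf_norm_scale_le[OF scale_Linf_fun[OF f]])
  finally have "\<bar>c\<bar> * Linf_norm f \<le> Linf_norm (\<lambda>x. c * f x)"
    using False by (simp add: field_simps)
  then show ?thesis using Linf_norm_scale_le[OF f, of c] by simp
qed

lemma Linf_norm_zero_iff:
  assumes f: "f \<in> Linf_fun"
  shows "Linf_norm f = 0 \<longleftrightarrow> (AE x in M01. f x = 0)"
proof
  assume "Linf_norm f = 0"
  then show "AE x in M01. f x = 0" using esssup_Linf_bounds(3)[OF f] by (auto elim!: eventually_mono)
next
  assume "AE x in M01. f x = 0"
  then have "Linf_norm f \<le> 0" by (intro Linf_norm_le f) (auto elim!: eventually_mono)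
  then show "Linf_norm f = 0" using Linf_norm_nonneg[OF f] by simp
qed

instantiation Linf01 :: real_normed_vector
begin

lift_definition zero_Linf01 :: Linf01 is "\<lambda>x. 0"
  by (simp add: Linf_rel_def zero_Linf_fun)

lift_definition plus_Linf01 :: "Linf01 \<Rightarrow> Linf01 \<Rightarrow> Linf01" is "\<lambda>f g x. f x + g x"
  by (auto simp: Linf_rel_def add_Linf_fun elim!: eventually_elim2)

lift_definition uminus_Linf01 :: "Linf01 \<Rightarrow> Linf01" is "\<lambda>f x. - f x"
  by (auto simp: Linf_rel_def uminus_Linf_fun elim!: eventually_mono)

lift_definition minus_Linf01 :: "Linf01 \<Rightarrow> Linf01 \<Rightarrow> Linf01" is "\<lambda>f g x. f x - g x"
  by (auto simp: Linf_rel_def diff_Linf_fun elim!: eventually_elim2)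

lift_definition scaleR_Linf01 :: "real \<Rightarrow> Linf01 \<Rightarrow> Linf01" is "\<lambda>c f x. c * f x"
  by (auto simp: Linf_rel_def scale_Linf_fun elim!: eventually_mono)

lift_definition norm_Linf01 :: "Linf01 \<Rightarrow> real" is Linf_norm
  by (rule Linf_norm_cong)

definition dist_Linf01 :: "Linf01 \<Rightarrow> Linf01 \<Rightarrow> real" where
  "dist_Linf01 x y = norm (x - y)"

definition sgn_Linf01 :: "Linf01 \<Rightarrow> Linf01" where
  "sgn_Linf01 x = scaleR (inverse (norm x)) x"

definition uniformity_Linf01 :: "(Linf01 \<times> Linf01) filter" where
  "uniformity_Linf01 = (INF e\<in>{0<..}. principal {(x, y). dist x y < e})"

definition open_Linf01 :: "Linf01 set \<Rightarrow> bool" where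
  "open_Linf01 U \<longleftrightarrow> (\<forall>x\<in>U. eventually (\<lambda>(x', y). x' = x \<longrightarrow> y \<in> U) uniformity)"

instance
proof
  fix a b c :: Linf01 and r s :: real
  show "a + b + c = a + (b + c)"
    by transfer (auto simp: Linf_rel_def add_Linf_fun)
  show "a + b = b + a"
    by transfer (auto simp: Linf_rel_def add_Linf_fun)
  show "0 + a = a"
    by transfer (auto simp: Linf_rel_def)
  show "- a + a = 0"
    by transfer (auto simp: Linf_rel_def add_Linf_fun uminus_Linf_fun zero_Linf_fun)
  show "a - b = a + - b"
    by transfer (auto simp: Linf_rel_def add_Linf_fun uminus_Linf_fun diff_Linf_fun)
  show "r *\<^sub>R (a + b) = r *\<^sub>R a + r *\<^sub>R b"
    by transfer (auto simp: Linf_rel_def add_Linf_fun scale_Linf_fun algebra_simps)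
  show "(r + s) *\<^sub>R a = r *\<^sub>R a + s *\<^sub>R a"
    by transfer (auto simp: Linf_rel_def add_Linf_fun scale_Linf_fun algebra_simps)
  show "r *\<^sub>R s *\<^sub>R a = (r * s) *\<^sub>R a"
    by transfer (auto simp: Linf_rel_def scale_Linf_fun)
  show "1 *\<^sub>R a = a"
    by transfer (auto simp: Linf_rel_def)
  show "dist a b = norm (a - b)" by (rule dist_Linf01_def)
  show "sgn a = inverse (norm a) *\<^sub>R a" by (rule sgn_Linf01_def)
  show "norm a = 0 \<longleftrightarrow> a = 0"
    by transfer (auto simp: Linf_rel_def Linf_norm_zero_iff zero_Linf_fun)
  show "norm (a + b) \<le> norm a + norm b"
    by transfer (auto simp: Linf_rel_def Linf_norm_triangle)
  show "norm (r *\<^sub>R a) = \<bar>r\<bar> * norm a"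
    by transfer (auto simp: Linf_rel_def Linf_norm_scale)
qed (simp_all add: uniformity_Linf01_def open_Linf01_def)

end

section \<open>The UALS property\<close>

definition closed_finite_codim_subspace :: "'a::real_normed_vector set \<Rightarrow> bool" where
  "closed_finite_codim_subspace Y \<longleftrightarrow>
     subspace Y \<and> closed Y \<and> (\<exists>F. finite F \<and> span (Y \<union> F) = UNIV)"

definition UALS :: "'a::real_normed_vector itself \<Rightarrow> bool" where
  "UALS _ \<longleftrightarrow>
    (\<exists>C>0. \<forall>(W :: ('a \<Rightarrow>\<^sub>L 'a) set) (A :: 'a \<Rightarrow>\<^sub>L 'a) (\<epsilon>::real).
        convex W \<and> compact W \<and> \<epsilon> > 0 \<and>
        (\<forall>x. norm x \<le> 1 \<longrightarrow> (\<exists>B\<in>W. norm (blinfun_apply A x - blinfun_apply B x) \<le> \<epsilon>))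
        \<longrightarrow> (\<exists>Y. \<exists>B\<in>W. closed_finite_codim_subspace Y \<and>
               (\<forall>y\<in>Y. norm (blinfun_apply (A - B) y) \<le> C * \<epsilon> * norm y)))"

end

theory Submission
  imports Defs
begin

lemma ident_M01[measurable]: "(\<lambda>x::real. x) \<in> borel_measurable M01"
  using id_borel_measurable_lebesgue_on[of "{0..1::real}"] by (simp add: id_def)

lemma finite_M01: "finite_measure M01"
  by (simp add: finite_measureI emeasure_restrict_space)

lemma cos_int_has_integral:
  fixes m :: int
  shows "((\<lambda>s. cos (2 * pi * of_int m * s)) has_integral (if m = 0 then 1 else 0)) {0..1}"
proof (cases "m = 0")
  case True
  then show ?thesis using has_integral_const_real[of "1::real" 0 1] by simp
next
  case False
  let ?F = "\<lambda>s. sin (2 * pi * of_int m * s) / (2 * pi * of_int m)"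
  have d: "(?F has_vector_derivative cos (2 * pi * of_int m * x)) (at x within {0..1})" for x
  proof -
    have "((\<lambda>s. sin (2 * pi * of_int m * s)) has_real_derivative cos (2 * pi * of_int m * x) * (2 * pi * of_int m)) (at x within {0..1})"
      by (auto intro!: derivative_eq_intros)
    then have "(?F has_real_derivative cos (2 * pi * of_int m * x) * (2 * pi * of_int m) / (2 * pi * of_int m)) (at x within {0..1})"
      by (intro DERIV_cdivide)
    then show ?thesis using False by (simp add: has_real_derivative_iff_has_vector_derivative)
  qed
  have "((\<lambda>s. cos (2 * pi * of_int m * s)) has_integral (?F 1 - ?F 0)) {0..1}"
    by (rule fundamental_theorem_of_calculus) (use d in auto)
  moreover have "?F 1 = 0" using sin_int_2pin[of m] by simp
  ultimately show ?thesis using False by simp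
qed

definition gf :: "nat \<Rightarrow> real \<Rightarrow> real" where
  "gf p s = cos (2 * pi * real (Suc p) * s)"

lemma gf_bound: "\<bar>gf p s\<bar> \<le> 1" by (simp add: gf_def)

lemma gf_meas[measurable]: "gf p \<in> borel_measurable M01"
  unfolding gf_def by measurable

lemma gf_cont: "continuous_on A (gf p)"
  unfolding gf_def by (intro continuous_intros)

lemma gf_prod_has_integral:
  "((\<lambda>s. gf p s * gf q s) has_integral (if p = q then 1/2 else 0)) {0..1}"
proof -
  define a where "a = int (Suc p)"
  define b where "b = int (Suc q)"
  have eq: "gf p s * gf q s = (cos (2 * pi * of_int (a - b) * s) + cos (2 * pi * of_int (a + b) * s)) / 2" for s
  proof -
    have "cos (2 * pi * of_int (a - b) * s) = cos (2 * pi * of_int a * s - 2 * pi * of_int b * s)"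
      by (simp add: algebra_simps)
    moreover have "cos (2 * pi * of_int (a + b) * s) = cos (2 * pi * of_int a * s + 2 * pi * of_int b * s)"
      by (simp add: algebra_simps)
    ultimately show ?thesis unfolding gf_def a_def b_def by (simp add: cos_diff cos_add)
  qed
  have ab: "a + b \<noteq> 0" "(a - b = 0) = (p = q)" unfolding a_def b_def by auto
  have "((\<lambda>s. (cos (2 * pi * of_int (a - b) * s) + cos (2 * pi * of_int (a + b) * s)) / 2) has_integral
     (((if a - b = 0 then 1 else 0) + (if a + b = 0 then 1 else 0)) / 2)) {0..1}"
    by (intro has_integral_divide has_integral_add cos_int_has_integral)
  then have "((\<lambda>s. gf p s * gf q s) has_integral (((if a - b = 0 then 1 else 0) + (if a + b = 0 then 1 else 0)) / 2)) {0..1}"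
    by (simp only: eq)
  then show ?thesis using ab by (cases "p = q") auto
qed

lemma gf_orth: "integral\<^sup>L M01 (\<lambda>s. gf p s * gf q s) = (if p = q then 1/2 else 0)"
proof -
  have "continuous_on {0..1} (\<lambda>s. gf p s * gf q s)" by (intro continuous_intros gf_cont)
  then have "integrable M01 (\<lambda>s. gf p s * gf q s)" by (rule continuous_imp_integrable_real)
  then have "integral\<^sup>L M01 (\<lambda>s. gf p s * gf q s) = integral {0..1} (\<lambda>s. gf p s * gf q s)"
    by (intro lebesgue_integral_eq_integral) auto
  then show ?thesis using gf_prod_has_integral[of p q] by (simp add: integral_unique)
qed

lemma Linf_funI: "f \<in> borel_measurable M01 \<Longrightarrow> (\<And>s. \<bar>f s\<bar> \<le> C) \<Longrightarrow> f \<in> Linf_fun"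
  unfolding Linf_fun_def by auto

lemma gf_Linf: "gf p \<in> Linf_fun"
  by (rule Linf_funI[OF gf_meas gf_bound])

lemma const_Linf: "(\<lambda>s. c) \<in> Linf_fun"
  by (rule Linf_funI[of _ "\<bar>c\<bar>"]) auto

lemma mult_Linf_fun:
  assumes "f \<in> Linf_fun" "g \<in> Linf_fun"
  shows "(\<lambda>s. f s * g s) \<in> Linf_fun"
proof -
  from assms obtain C D where f: "f \<in> borel_measurable M01" "AE x in M01. \<bar>f x\<bar> \<le> C"
    and g: "g \<in> borel_measurable M01" "AE x in M01. \<bar>g x\<bar> \<le> D"
    unfolding Linf_fun_def by auto
  have "AE x in M01. \<bar>f x * g x\<bar> \<le> C * D"
    using f(2) g(2) by eventually_elim (auto simp: abs_mult intro: mult_mono)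
  then show ?thesis unfolding Linf_fun_def using f(1) g(1) by auto
qed

lemma sum_Linf_fun:
  assumes "\<And>p. p \<in> P \<Longrightarrow> f p \<in> Linf_fun"
  shows "(\<lambda>s. \<Sum>p\<in>P. f p s) \<in> Linf_fun"
  using assms
proof (induction P rule: infinite_finite_induct)
  case (infinite A) then show ?case using const_Linf[of 0] by simp
next
  case empty then show ?case using const_Linf[of 0] by simp
next
  case (insert x F) then show ?case by (simp add: add_Linf_fun)
qed

lemma Linf_integrable: "f \<in> Linf_fun \<Longrightarrow> integrable M01 f"
  unfolding Linf_fun_def
  by (auto intro!: finite_measure.integrable_const_bound[OF finite_M01])

definition Phi :: "nat \<Rightarrow> (real \<Rightarrow> real) \<Rightarrow> real" where
  "Phi p f = integral\<^sup>L M01 (\<lambda>s. f s * gf p s)"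

lemma measure_M01: "measure M01 (space M01) = 1"
  by (simp add: measure_restrict_space)

lemma Phi_bound:
  assumes f: "f \<in> Linf_fun"
  shows "\<bar>Phi p f\<bar> \<le> Linf_norm f"
proof -
  have i: "integrable M01 (\<lambda>s. f s * gf p s)" by (intro Linf_integrable mult_Linf_fun f gf_Linf)
  have "\<bar>Phi p f\<bar> \<le> integral\<^sup>L M01 (\<lambda>s. \<bar>f s * gf p s\<bar>)"
    unfolding Phi_def using integral_abs_bound by blast
  also have "\<dots> \<le> integral\<^sup>L M01 (\<lambda>s. Linf_norm f)"
  proof (rule integral_mono_AE)
    show "integrable M01 (\<lambda>s. \<bar>f s * gf p s\<bar>)" using i by simp
    show "integrable M01 (\<lambda>s. Linf_norm f)" by (rule Linf_integrable[OF const_Linf])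
    show "AE s in M01. \<bar>f s * gf p s\<bar> \<le> Linf_norm f"
      using esssup_Linf_bounds(3)[OF f]
    proof eventually_elim
      case (elim s)
      have "\<bar>f s * gf p s\<bar> \<le> \<bar>f s\<bar> * 1" unfolding abs_mult
        by (intro mult_left_mono gf_bound) auto
      then show ?case using elim by simp
    qed
  qed
  also have "\<dots> = Linf_norm f" using measure_M01 by simp
  finally show ?thesis .
qed

lemma Bessel:
  assumes f: "f \<in> Linf_fun" and P: "finite P"
  shows "(\<Sum>p\<in>P. (Phi p f)\<^sup>2) \<le> (Linf_norm f)\<^sup>2 / 2"
proof -
  define c where "c p = Phi p f" for p
  define u where "u s = (\<Sum>p\<in>P. c p * gf p s)" for s
  have uL: "u \<in> Linf_fun" unfolding u_def
    by (intro sum_Linf_fun scale_Linf_fun gf_Linf)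
  have Lfg: "(\<lambda>s. f s * gf p s) \<in> Linf_fun" for p by (intro mult_Linf_fun f gf_Linf)
  have fu: "integral\<^sup>L M01 (\<lambda>s. f s * u s) = (\<Sum>p\<in>P. (c p)\<^sup>2)"
  proof -
    have "integral\<^sup>L M01 (\<lambda>s. f s * u s) = integral\<^sup>L M01 (\<lambda>s. \<Sum>p\<in>P. c p * (f s * gf p s))"
      unfolding u_def by (simp add: sum_distrib_left algebra_simps)
    also have "\<dots> = (\<Sum>p\<in>P. integral\<^sup>L M01 (\<lambda>s. c p * (f s * gf p s)))"
      by (rule Bochner_Integration.integral_sum[where f="\<lambda>p s. c p * (f s * gf p s)"]) (intro integrable_mult_right Linf_integrable Lfg)
    also have "\<dots> = (\<Sum>p\<in>P. c p * c p)"
      by (simp add: c_def Phi_def)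
    finally show ?thesis by (simp add: power2_eq_square)
  qed
  have uu: "integral\<^sup>L M01 (\<lambda>s. u s * u s) = (\<Sum>p\<in>P. (c p)\<^sup>2) / 2"
  proof -
    have "integral\<^sup>L M01 (\<lambda>s. u s * u s) = integral\<^sup>L M01 (\<lambda>s. \<Sum>p\<in>P. \<Sum>q\<in>P. c p * c q * (gf p s * gf q s))"
      unfolding u_def by (simp add: sum_distrib_left sum_distrib_right algebra_simps)
    also have "\<dots> = (\<Sum>p\<in>P. \<Sum>q\<in>P. integral\<^sup>L M01 (\<lambda>s. c p * c q * (gf p s * gf q s)))"
      by (simp add: Bochner_Integration.integral_sum integrable_sum integrable_mult_right Linf_integrable mult_Linf_fun gf_Linf)
    also have "\<dots> = (\<Sum>p\<in>P. \<Sum>q\<in>P. c p * c q * (if p = q then 1/2 else 0))"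
      by (simp add: gf_orth)
    also have "\<dots> = (\<Sum>p\<in>P. c p * c p / 2)"
      using P by (simp add: if_distrib sum.delta cong: if_cong)
    finally show ?thesis by (simp add: power2_eq_square sum_divide_distrib)
  qed
  have nn: "0 \<le> integral\<^sup>L M01 (\<lambda>s. (f s - 2 * u s)\<^sup>2)" by simp
  have "integral\<^sup>L M01 (\<lambda>s. (f s - 2 * u s)\<^sup>2) =
        integral\<^sup>L M01 (\<lambda>s. f s * f s) - 4 * integral\<^sup>L M01 (\<lambda>s. f s * u s) + 4 * integral\<^sup>L M01 (\<lambda>s. u s * u s)"
  proof -
    have i1: "integrable M01 (\<lambda>s. f s * f s)" by (intro Linf_integrable mult_Linf_fun f)
    have i2: "integrable M01 (\<lambda>s. f s * u s)" by (intro Linf_integrable mult_Linf_fun f uL)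
    have i3: "integrable M01 (\<lambda>s. u s * u s)" by (intro Linf_integrable mult_Linf_fun uL)
    have "(\<lambda>s. (f s - 2 * u s)\<^sup>2) = (\<lambda>s. (f s * f s - 4 * (f s * u s)) + 4 * (u s * u s))"
      by (auto simp: power2_eq_square algebra_simps)
    then show ?thesis using i1 i2 i3 by simp
  qed
  moreover have "integral\<^sup>L M01 (\<lambda>s. f s * f s) \<le> (Linf_norm f)\<^sup>2"
  proof -
    have "integral\<^sup>L M01 (\<lambda>s. f s * f s) \<le> integral\<^sup>L M01 (\<lambda>s. (Linf_norm f)\<^sup>2)"
    proof (rule integral_mono_AE)
      show "integrable M01 (\<lambda>s. f s * f s)" by (intro Linf_integrable mult_Linf_fun f)
      show "integrable M01 (\<lambda>s. (Linf_norm f)\<^sup>2)" by (rule Linf_integrable[OF const_Linf])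
      show "AE s in M01. f s * f s \<le> (Linf_norm f)\<^sup>2"
        using esssup_Linf_bounds(3)[OF f]
      proof eventually_elim
        case (elim s)
        have "f s * f s = \<bar>f s\<bar> * \<bar>f s\<bar>" by simp
        also have "\<dots> \<le> Linf_norm f * Linf_norm f" using elim by (intro mult_mono) auto
        finally show ?case by (simp add: power2_eq_square)
      qed
    qed
    then show ?thesis using measure_M01 by simp
  qed
  ultimately show ?thesis using nn fu uu unfolding c_def by linarith
qed

lemma Ioo_pos:
  assumes "0 \<le> a" "a < b" "b \<le> 1"
  shows "\<not> (AE s in M01. s \<notin> {a<..<b})"
proof
  assume ae: "AE s in M01. s \<notin> {a<..<b}"
  have sub: "{a<..<b} \<subseteq> {0..1::real}" using assms by auto
  have inS: "{a<..<b} \<in> sets M01"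
    using sub by (subst sets_restrict_space_iff) auto
  have "(AE s in M01. s \<notin> {a<..<b}) = (emeasure M01 {a<..<b} = 0)"
    by (rule AE_iff_measurable[OF inS]) (use sub in auto)
  then have "emeasure M01 {a<..<b} = 0" using ae by simp
  moreover have "emeasure M01 {a<..<b} = emeasure lebesgue {a<..<b}"
    using sub by (intro emeasure_restrict_space) auto
  moreover have "emeasure lebesgue {a<..<b} = ennreal (b - a)"
    using emeasure_lborel_box_eq[of a b] assms by (simp add: box_real)
  ultimately show False using assms by simp
qed

definition idx :: "real \<Rightarrow> nat" where "idx s = nat \<lfloor>1 / s\<rfloor>"

lemma idx_meas[measurable]: "idx \<in> measurable M01 (count_space UNIV)"
  unfolding idx_def by measurable

definition Tf :: "nat \<Rightarrow> (nat \<Rightarrow> real) \<Rightarrow> (real \<Rightarrow> real) \<Rightarrow> real \<Rightarrow> real" where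
  "Tf N c f s = c (idx s mod Suc N) * Phi (idx s) f"

lemma Tf_meas: "Tf N c f \<in> borel_measurable M01"
proof -
  have "(\<lambda>s. (\<lambda>i (_::real). c (i mod Suc N) * Phi i f) (idx s) s) \<in> borel_measurable M01"
    by (rule measurable_compose_countable[OF _ idx_meas]) simp
  then show ?thesis unfolding Tf_def by simp
qed

definition cb :: "nat \<Rightarrow> (nat \<Rightarrow> real) \<Rightarrow> real" where
  "cb N c = (\<Sum>j\<le>N. \<bar>c j\<bar>)"

lemma cb_bound: "\<bar>c (m mod Suc N)\<bar> \<le> cb N c"
  unfolding cb_def by (rule member_le_sum[where f="\<lambda>j. \<bar>c j\<bar>"]) (auto simp: less_Suc_eq_le[symmetric])

lemma Tf_bound:
  assumes f: "f \<in> Linf_fun"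
  shows "\<bar>Tf N c f s\<bar> \<le> cb N c * Linf_norm f"
  unfolding Tf_def abs_mult
  by (intro mult_mono cb_bound Phi_bound f) (auto simp: cb_def)

lemma Tf_Linf: "f \<in> Linf_fun \<Longrightarrow> Tf N c f \<in> Linf_fun"
  by (rule Linf_funI[OF Tf_meas Tf_bound])

lemma Phi_cong:
  assumes r: "Linf_rel f g" shows "Phi p f = Phi p g"
proof -
  have f: "f \<in> borel_measurable M01" and g: "g \<in> borel_measurable M01" and ae: "AE s in M01. f s = g s"
    using r unfolding Linf_rel_def Linf_fun_def by auto
  show ?thesis unfolding Phi_def
    by (rule integral_cong_AE) (use f g ae in \<open>auto elim!: eventually_mono\<close>)
qed

lemma Tf_cong: "Linf_rel f g \<Longrightarrow> Tf N c f = Tf N c g"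
  unfolding Tf_def using Phi_cong by (auto intro!: ext)

lift_definition TL :: "nat \<Rightarrow> (nat \<Rightarrow> real) \<Rightarrow> Linf01 \<Rightarrow> Linf01" is Tf
proof -
  fix N c f g assume r: "Linf_rel f g"
  then have "f \<in> Linf_fun" unfolding Linf_rel_def by auto
  then have "Tf N c f \<in> Linf_fun" by (rule Tf_Linf)
  moreover have "Tf N c g = Tf N c f" using Tf_cong[OF r] by simp
  ultimately show "Linf_rel (Tf N c f) (Tf N c g)"
    unfolding Linf_rel_def by auto
qed

lift_definition PhiL :: "nat \<Rightarrow> Linf01 \<Rightarrow> real" is Phi
  by (rule Phi_cong)

lemma PhiL_bound: "\<bar>PhiL p x\<bar> \<le> norm x"
  by transfer (auto simp: Linf_rel_def Phi_bound)

lemma Bessel_L: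
  fixes P :: "nat set"
  assumes "finite P"
  shows "(\<Sum>p\<in>P. (PhiL p x)\<^sup>2) \<le> (norm x)\<^sup>2 / 2"
  using assms
proof transfer
  fix P :: "nat set" and f assume "finite P" "Linf_rel f f"
  then show "(\<Sum>p\<in>P. (Phi p f)\<^sup>2) \<le> (Linf_norm f)\<^sup>2 / 2"
    by (intro Bessel) (auto simp: Linf_rel_def)
qed

lemma Phi_add: "f \<in> Linf_fun \<Longrightarrow> g \<in> Linf_fun \<Longrightarrow> Phi p (\<lambda>s. f s + g s) = Phi p f + Phi p g"
  unfolding Phi_def
  by (simp add: distrib_right Linf_integrable mult_Linf_fun gf_Linf)

lemma Phi_scale: "Phi p (\<lambda>s. a * f s) = a * Phi p f"
  unfolding Phi_def by (simp add: mult.assoc)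

lemma PhiL_add: "PhiL p (x + y) = PhiL p x + PhiL p y"
  by transfer (auto simp: Linf_rel_def Phi_add)

lemma PhiL_scale: "PhiL p (a *\<^sub>R x) = a * PhiL p x"
  by transfer (auto simp: Phi_scale)

lemma PhiL_diff: "PhiL p (x - y) = PhiL p x - PhiL p y"
  using PhiL_add[of p "x - y" y] by simp

lemma TL_norm_le:
  assumes "\<And>p. \<bar>c (p mod Suc N) * PhiL p x\<bar> \<le> b"
  shows "norm (TL N c x) \<le> b"
  using assms
proof transfer
  fix c N f b assume r: "Linf_rel f f" and h: "\<And>p. \<bar>c (p mod Suc N) * Phi p f\<bar> \<le> b"
  have "f \<in> Linf_fun" using r unfolding Linf_rel_def by auto
  then show "Linf_norm (Tf N c f) \<le> b"
    by (intro Linf_norm_le Tf_Linf) (auto simp: Tf_def h)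
qed

lemma idx_on: "p \<ge> 1 \<Longrightarrow> s \<in> {1 / (real p + 1)<..<1 / real p} \<Longrightarrow> idx s = p"
proof -
  assume p: "p \<ge> 1" and s: "s \<in> {1 / (real p + 1)<..<1 / real p}"
  have sp: "s > 0" using s p by (auto intro: less_trans[rotated])
  have "1 / s < real p + 1"
    using s sp p by (auto simp: field_simps)
  moreover have "real p < 1 / s"
    using s sp p by (auto simp: field_simps)
  ultimately have "\<lfloor>1 / s\<rfloor> = int p" by (intro floor_unique) auto
  then show ?thesis unfolding idx_def by simp
qed

lemma TL_norm_ge:
  assumes p: "p \<ge> 1"
  shows "\<bar>c (p mod Suc N) * PhiL p x\<bar> \<le> norm (TL N c x)"
  using assms
proof transfer
  fix c N f and p :: nat assume r: "Linf_rel f f" and p: "1 \<le> p"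
  have f: "f \<in> Linf_fun" using r unfolding Linf_rel_def by auto
  show "\<bar>c (p mod Suc N) * Phi p f\<bar> \<le> Linf_norm (Tf N c f)"
  proof (rule ccontr)
    assume "\<not> ?thesis"
    then have lt: "Linf_norm (Tf N c f) < \<bar>c (p mod Suc N) * Phi p f\<bar>" by simp
    have "AE s in M01. s \<notin> {1 / (real p + 1)<..<1 / real p}"
      using esssup_Linf_bounds(3)[OF Tf_Linf[OF f, of N c]]
    proof eventually_elim
      case (elim s)
      show ?case
      proof
        assume "s \<in> {1 / (real p + 1)<..<1 / real p}"
        then have "idx s = p" using idx_on p by blast
        then show False using elim lt by (simp add: Tf_def)
      qed
    qed
    moreover have "\<not> (AE s in M01. s \<notin> {1 / (real p + 1)<..<1 / real p})"
      using p by (intro Ioo_pos) (auto simp: field_simps)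
    ultimately show False by blast
  qed
qed


lemma span_insert_subspace:
  assumes "subspace Y"
  shows "span (insert f Y) = {z. \<exists>k. z - k *\<^sub>R f \<in> Y}"
  using assms by (simp add: span_insert span_eq_iff[THEN iffD2])

lemma infdist_scale_bound:
  fixes f :: "'a::real_normed_vector"
  assumes Y: "subspace Y" and yY: "y \<in> Y"
  shows "\<bar>k\<bar> * infdist f Y \<le> norm (y + k *\<^sub>R f)"
proof (cases "k = 0")
  case True then show ?thesis by simp
next
  case False
  have "- (1/k) *\<^sub>R y \<in> Y" using Y yY by (simp add: subspace_scale subspace_neg)
  then have "infdist f Y \<le> dist f (- (1/k) *\<^sub>R y)" by (rule infdist_le)
  also have "\<dots> = norm (f + (1/k) *\<^sub>R y)" by (simp add: dist_norm)
  finally have "\<bar>k\<bar> * infdist f Y \<le> \<bar>k\<bar> * norm (f + (1/k) *\<^sub>R y)"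
    by (intro mult_left_mono) auto
  also have "\<bar>k\<bar> * norm (f + (1/k) *\<^sub>R y) = norm (k *\<^sub>R (f + (1/k) *\<^sub>R y))" by simp
  also have "k *\<^sub>R (f + (1/k) *\<^sub>R y) = y + k *\<^sub>R f" using False by (simp add: algebra_simps)
  finally show ?thesis .
qed

lemma closed_span_insert:
  fixes Y :: "'a::real_normed_vector set"
  assumes Y: "subspace Y" "closed Y"
  shows "closed (span (insert f Y))"
proof (cases "f \<in> Y")
  case True
  then have "span (insert f Y) = Y" using Y
    by (simp add: insert_absorb span_eq_iff[THEN iffD2])
  then show ?thesis using Y by simp
next
  case False
  have Yne: "Y \<noteq> {}" using Y subspace_0 by blast
  define d where "d = infdist f Y"
  have d: "d > 0" unfolding d_def using False Y Yne by (intro infdist_pos_not_in_closed) auto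
  have eq: "span (insert f Y) = {z. \<exists>k. z - k *\<^sub>R f \<in> Y}" by (rule span_insert_subspace[OF Y(1)])
  show ?thesis unfolding eq closed_sequential_limits
  proof (intro allI impI, elim conjE)
    fix z l assume zin: "\<forall>n. z n \<in> {z. \<exists>k. z - k *\<^sub>R f \<in> Y}" and lim: "z \<longlonglongrightarrow> l"
    obtain c where c: "\<And>n. z n - c n *\<^sub>R f \<in> Y" using zin by simp metis
    have cd: "\<bar>c n - c m\<bar> * d \<le> norm (z n - z m)" for n m
    proof -
      have "((z n - c n *\<^sub>R f) - (z m - c m *\<^sub>R f)) \<in> Y"
        using subspace_diff[OF Y(1) c[of n] c[of m]] .
      then have "\<bar>c n - c m\<bar> * d \<le> norm (((z n - c n *\<^sub>R f) - (z m - c m *\<^sub>R f)) + (c n - c m) *\<^sub>R f)"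
        unfolding d_def by (rule infdist_scale_bound[OF Y(1)])
      also have "((z n - c n *\<^sub>R f) - (z m - c m *\<^sub>R f)) + (c n - c m) *\<^sub>R f = (z n - z m)"
        by (simp add: algebra_simps)
      finally show ?thesis by simp
    qed
    have "Cauchy c"
    proof (rule metric_CauchyI)
      fix e :: real assume e: "e > 0"
      have "Cauchy z" using lim by (rule LIMSEQ_imp_Cauchy)
      then obtain M where M: "\<And>m n. m \<ge> M \<Longrightarrow> n \<ge> M \<Longrightarrow> dist (z m) (z n) < e * d"
        using e d by (meson metric_CauchyD mult_pos_pos)
      show "\<exists>M. \<forall>m\<ge>M. \<forall>n\<ge>M. dist (c m) (c n) < e"
      proof (intro exI allI impI)
        fix m n assume "m \<ge> M" "n \<ge> M"
        then have "\<bar>c m - c n\<bar> * d < e * d" using cd[of m n] M[of m n] by (simp add: dist_norm)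
        then show "dist (c m) (c n) < e" using d by (simp add: dist_real_def)
      qed
    qed
    then obtain k where k: "c \<longlonglongrightarrow> k" using Cauchy_convergent_iff convergent_def by blast
    have "(\<lambda>n. z n - c n *\<^sub>R f) \<longlonglongrightarrow> l - k *\<^sub>R f"
      by (intro tendsto_intros lim k)
    then have "l - k *\<^sub>R f \<in> Y" using closed_sequentially[where S=Y and f="\<lambda>n. z n - c n *\<^sub>R f", OF Y(2) c] by blast
    then show "l \<in> {z. \<exists>k. z - k *\<^sub>R f \<in> Y}" by blast
  qed
qed

definition hsum :: "(('a::real_normed_vector \<Rightarrow> real) \<times> 'a) list \<Rightarrow> 'a \<Rightarrow> 'a" where
  "hsum ps x = sum_list (map (\<lambda>q. fst q x *\<^sub>R snd q) ps)"

lemma hsum_Nil[simp]: "hsum [] x = 0" by (simp add: hsum_def)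
lemma hsum_Cons[simp]: "hsum (q # ps) x = fst q x *\<^sub>R snd q + hsum ps x" by (simp add: hsum_def)

lemma bl_hsum: "(\<forall>q\<in>set ps. bounded_linear (fst q)) \<Longrightarrow> bounded_linear (hsum ps)"
proof (induction ps)
  case Nil
  have "hsum [] = (\<lambda>x. 0)" by (simp add: fun_eq_iff)
  then show ?case using bounded_linear_zero by simp
next
  case (Cons q ps)
  have "bounded_linear (\<lambda>x. fst q x *\<^sub>R snd q)"
    using Cons.prems by (intro bounded_linear_scaleR_left[THEN bounded_linear_compose]) auto
  then have "bounded_linear (\<lambda>x. fst q x *\<^sub>R snd q + hsum ps x)"
    using Cons by (intro bounded_linear_add) auto
  then show ?case by simp
qed

lemma fc_proj:
  fixes Y :: "'a::real_normed_vector set"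
  assumes "finite F"
  shows "subspace Y \<Longrightarrow> closed Y \<Longrightarrow> span (Y \<union> F) = UNIV \<Longrightarrow>
    \<exists>ps :: (('a \<Rightarrow> real) \<times> 'a) list. (\<forall>q\<in>set ps. bounded_linear (fst q)) \<and> (\<forall>x. x - hsum ps x \<in> Y)"
  using assms
proof (induction F arbitrary: Y rule: finite_induct)
  case empty
  then have "Y = UNIV" by (simp add: span_eq_iff[THEN iffD2])
  then show ?case by (intro exI[of _ "[]"]) simp
next
  case (insert f F Y)
  define Y' where "Y' = span (insert f Y)"
  have sY': "subspace Y'" unfolding Y'_def by (rule subspace_span)
  have cY': "closed Y'" unfolding Y'_def using insert.prems by (intro closed_span_insert) auto
  have "Y \<union> insert f F \<subseteq> span (Y' \<union> F)"
  proof -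
    have "Y \<union> {f} \<subseteq> Y'" unfolding Y'_def using span_superset by blast
    then show ?thesis using span_superset[of "Y' \<union> F"] by blast
  qed
  then have "span (Y \<union> insert f F) \<subseteq> span (Y' \<union> F)"
    by (intro span_minimal subspace_span)
  then have spY': "span (Y' \<union> F) = UNIV" using insert.prems by auto
  obtain ps' where ps': "\<forall>q\<in>set ps'. bounded_linear (fst q)" "\<And>x. x - hsum ps' x \<in> Y'"
    using insert.IH[OF sY' cY' spY'] by blast
  have blh: "bounded_linear (hsum ps')" using bl_hsum ps'(1) by blast
  show ?case
  proof (cases "f \<in> Y")
    case True
    then have "Y' = Y" unfolding Y'_def using insert.prems
      by (simp add: insert_absorb span_eq_iff[THEN iffD2])
    then show ?thesis using ps' by blast
  next
    case False
    have sY: "subspace Y" and cY: "closed Y" using insert.prems by auto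
    have Yne: "Y \<noteq> {}" using sY subspace_0 by blast
    define d where "d = infdist f Y"
    have d: "d > 0" unfolding d_def using False cY Yne by (intro infdist_pos_not_in_closed) auto
    have Y'eq: "Y' = {z. \<exists>k. z - k *\<^sub>R f \<in> Y}" unfolding Y'_def by (rule span_insert_subspace[OF sY])
    define cf where "cf z = (THE k. z - k *\<^sub>R f \<in> Y)" for z
    have uniq: "k = k'" if "z - k *\<^sub>R f \<in> Y" "z - k' *\<^sub>R f \<in> Y" for z k k'
    proof (rule ccontr)
      assume ne: "k \<noteq> k'"
      have "(z - k *\<^sub>R f) - (z - k' *\<^sub>R f) \<in> Y" using subspace_diff[OF sY that] .
      then have "(k' - k) *\<^sub>R f \<in> Y" by (simp add: algebra_simps)
      then have "(1 / (k' - k)) *\<^sub>R ((k' - k) *\<^sub>R f) \<in> Y" by (rule subspace_scale[OF sY])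
      then show False using ne False by simp
    qed
    have cf_unique: "cf z = k" if "z - k *\<^sub>R f \<in> Y" for z k
      unfolding cf_def using that uniq by (intro the_equality) auto
    have cf_spec: "z - cf z *\<^sub>R f \<in> Y" if zY: "z \<in> Y'" for z
    proof -
      obtain k where "z - k *\<^sub>R f \<in> Y" using zY Y'eq by auto
      then show ?thesis using cf_unique by simp
    qed
    have cf_bound: "\<bar>cf z\<bar> * d \<le> norm z" if "z \<in> Y'" for z
    proof -
      have "\<bar>cf z\<bar> * d \<le> norm ((z - cf z *\<^sub>R f) + cf z *\<^sub>R f)"
        unfolding d_def by (rule infdist_scale_bound[OF sY cf_spec[OF that]])
      then show ?thesis by simp
    qed
    define psi where "psi x = cf (x - hsum ps' x)" for x
    have zin: "x - hsum ps' x \<in> Y'" for x using ps'(2) .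
    have psi_spec: "(x - hsum ps' x) - psi x *\<^sub>R f \<in> Y" for x
      unfolding psi_def by (rule cf_spec[OF zin])
    have psi_add: "psi (x + y) = psi x + psi y" for x y
    proof -
      have "(x + y - hsum ps' (x + y)) - (psi x + psi y) *\<^sub>R f =
            ((x - hsum ps' x) - psi x *\<^sub>R f) + ((y - hsum ps' y) - psi y *\<^sub>R f)"
        using linear_add[OF bounded_linear.linear[OF blh]] by (simp add: algebra_simps)
      also have "\<dots> \<in> Y" by (rule subspace_add[OF sY psi_spec psi_spec])
      finally show ?thesis unfolding psi_def[of "x + y"] by (rule cf_unique)
    qed
    have psi_scale: "psi (a *\<^sub>R x) = a * psi x" for a x
    proof -
      have "(a *\<^sub>R x - hsum ps' (a *\<^sub>R x)) - (a * psi x) *\<^sub>R f =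
            a *\<^sub>R ((x - hsum ps' x) - psi x *\<^sub>R f)"
        using linear_scale[OF bounded_linear.linear[OF blh]] by (simp add: algebra_simps)
      also have "\<dots> \<in> Y" by (rule subspace_scale[OF sY psi_spec])
      finally show ?thesis unfolding psi_def[of "a *\<^sub>R x"] by (rule cf_unique)
    qed
    obtain Kh where Kh: "\<And>x. norm (hsum ps' x) \<le> norm x * Kh"
      using bounded_linear.bounded[OF blh] by blast
    have psi_bound: "norm (psi x) \<le> norm x * ((1 + \<bar>Kh\<bar>) / d)" for x
    proof -
      have "\<bar>psi x\<bar> * d \<le> norm (x - hsum ps' x)" unfolding psi_def by (rule cf_bound[OF zin])
      also have "\<dots> \<le> norm x + norm (hsum ps' x)" by (rule norm_triangle_ineq4)
      also have "\<dots> \<le> norm x + norm x * \<bar>Kh\<bar>"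
        using Kh[of x] by (smt (verit) mult_left_mono norm_ge_zero abs_ge_self)
      finally have "\<bar>psi x\<bar> * d \<le> norm x * (1 + \<bar>Kh\<bar>)" by (simp add: algebra_simps)
      then show ?thesis using d by (simp add: field_simps)
    qed
    have blpsi: "bounded_linear psi"
      by (rule bounded_linear_intro[OF psi_add _ psi_bound]) (simp add: psi_scale)
    show ?thesis
    proof (intro exI[of _ "(psi, f) # ps'"] conjI allI ballI)
      fix q assume "q \<in> set ((psi, f) # ps')"
      then show "bounded_linear (fst q)" using ps'(1) blpsi by auto
    next
      fix x
      have "x - hsum ((psi, f) # ps') x = (x - hsum ps' x) - psi x *\<^sub>R f" by (simp add: algebra_simps)
      then show "x - hsum ((psi, f) # ps') x \<in> Y" using psi_spec[of x] by metis
    qed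
  qed
qed

lemma not_inj_nat:
  fixes g :: "nat \<Rightarrow> 'b"
  assumes "finite (range g)"
  shows "\<exists>k l. k \<noteq> l \<and> g k = g l"
proof (rule ccontr)
  assume "\<not> ?thesis"
  then have "inj g" unfolding inj_def by blast
  then have "finite (UNIV :: nat set)" using assms finite_imageD by blast
  then show False by simp
qed

lemma pigeon_list:
  fixes t :: "nat \<Rightarrow> 'a" and phis :: "('a \<Rightarrow> real) list"
  assumes B: "\<And>\<phi> k. \<phi> \<in> set phis \<Longrightarrow> \<bar>\<phi> (t k)\<bar> \<le> bnd \<phi>" and eta: "\<eta> > 0"
  shows "\<exists>k l. k \<noteq> l \<and> (\<forall>\<phi>\<in>set phis. \<bar>\<phi> (t k) - \<phi> (t l)\<bar> < \<eta>)"
proof -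
  define R where "R \<phi> = \<lceil>bnd \<phi> / \<eta>\<rceil> + 1" for \<phi>
  define A where "A = (\<Union>\<phi>\<in>set phis. {- R \<phi>..R \<phi>})"
  define code where "code k = map (\<lambda>\<phi>. \<lfloor>\<phi> (t k) / \<eta>\<rfloor>) phis" for k
  have finA: "finite A" unfolding A_def by auto
  have "range code \<subseteq> {xs. set xs \<subseteq> A \<and> length xs = length phis}"
  proof safe
    fix k z assume "z \<in> set (code k)"
    then obtain \<phi> where \<phi>: "\<phi> \<in> set phis" and z: "z = \<lfloor>\<phi> (t k) / \<eta>\<rfloor>" unfolding code_def by auto
    have b: "\<bar>\<phi> (t k)\<bar> \<le> bnd \<phi>" using B[OF \<phi>] .
    have "\<phi> (t k) / \<eta> \<le> bnd \<phi> / \<eta>" using b eta by (simp add: divide_right_mono)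
    then have "\<lfloor>\<phi> (t k) / \<eta>\<rfloor> \<le> \<lfloor>bnd \<phi> / \<eta>\<rfloor>" by (rule floor_mono)
    moreover have "\<lfloor>bnd \<phi> / \<eta>\<rfloor> \<le> \<lceil>bnd \<phi> / \<eta>\<rceil>" by (rule floor_le_ceiling)
    ultimately have up: "z \<le> R \<phi>" unfolding z R_def by linarith
    have "- bnd \<phi> \<le> \<phi> (t k)" using b by linarith
    then have "- bnd \<phi> / \<eta> \<le> \<phi> (t k) / \<eta>" by (rule divide_right_mono) (use eta in simp)
    then have "- (bnd \<phi> / \<eta>) \<le> \<phi> (t k) / \<eta>" by simp
    then have "\<lfloor>- (bnd \<phi> / \<eta>)\<rfloor> \<le> \<lfloor>\<phi> (t k) / \<eta>\<rfloor>" by (rule floor_mono)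
    moreover have "\<lfloor>- (bnd \<phi> / \<eta>)\<rfloor> = - \<lceil>bnd \<phi> / \<eta>\<rceil>" by (simp add: ceiling_def)
    ultimately have lo: "- R \<phi> \<le> z" unfolding z R_def by linarith
    show "z \<in> A" unfolding A_def using \<phi> up lo by auto
  qed (simp add: code_def)
  then have "finite (range code)"
    by (rule finite_subset) (rule finite_lists_length_eq[OF finA])
  then obtain k l where kl: "k \<noteq> l" "code k = code l" using not_inj_nat by blast
  show ?thesis
  proof (intro exI conjI ballI)
    show "k \<noteq> l" by fact
    fix \<phi> assume \<phi>: "\<phi> \<in> set phis"
    have "\<lfloor>\<phi> (t k) / \<eta>\<rfloor> = \<lfloor>\<phi> (t l) / \<eta>\<rfloor>" using kl(2) \<phi> unfolding code_def
      by (simp add: map_eq_conv)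
    moreover have "real_of_int \<lfloor>\<phi> (t k) / \<eta>\<rfloor> \<le> \<phi> (t k) / \<eta>" "\<phi> (t k) / \<eta> < real_of_int \<lfloor>\<phi> (t k) / \<eta>\<rfloor> + 1"
      "real_of_int \<lfloor>\<phi> (t l) / \<eta>\<rfloor> \<le> \<phi> (t l) / \<eta>" "\<phi> (t l) / \<eta> < real_of_int \<lfloor>\<phi> (t l) / \<eta>\<rfloor> + 1"
      by (simp_all add: of_int_floor_le real_of_int_floor_add_one_gt)
    ultimately have "\<bar>\<phi> (t k) / \<eta> - \<phi> (t l) / \<eta>\<bar> < 1" by linarith
    then have "\<bar>(\<phi> (t k) - \<phi> (t l)) / \<eta>\<bar> < 1" by (simp add: diff_divide_distrib)
    then show "\<bar>\<phi> (t k) - \<phi> (t l)\<bar> < \<eta>" using eta by (simp add: abs_divide)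
  qed
qed

lemma hsum_norm_le:
  assumes "\<And>q. q \<in> set ps \<Longrightarrow> \<bar>fst q x\<bar> \<le> e"
  shows "norm (hsum ps x) \<le> e * sum_list (map (\<lambda>q. norm (snd q)) ps)"
  using assms
proof (induction ps)
  case Nil then show ?case by simp
next
  case (Cons q ps)
  have "norm (hsum (q # ps) x) = norm (fst q x *\<^sub>R snd q + hsum ps x)" by simp
  also have "\<dots> \<le> norm (fst q x *\<^sub>R snd q) + norm (hsum ps x)" by (rule norm_triangle_ineq)
  also have "\<dots> = \<bar>fst q x\<bar> * norm (snd q) + norm (hsum ps x)" by simp
  also have "\<dots> \<le> e * norm (snd q) + e * sum_list (map (\<lambda>q. norm (snd q)) ps)"
    using Cons by (intro add_mono mult_right_mono) auto
  finally show ?case by (simp add: algebra_simps)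
qed

lemma fc_pair:
  fixes Y :: "'a::real_normed_vector set" and t :: "nat \<Rightarrow> 'a"
  assumes Y: "closed_finite_codim_subspace Y" and t: "\<And>k. norm (t k) \<le> 1" and eta: "\<eta> > 0"
  shows "\<exists>k l. k \<noteq> l \<and> (\<exists>y\<in>Y. norm (t k - t l - y) \<le> \<eta>)"
proof -
  obtain F where F: "finite F" "span (Y \<union> F) = UNIV" and sY: "subspace Y" and cY: "closed Y"
    using Y unfolding closed_finite_codim_subspace_def by blast
  obtain ps :: "(('a \<Rightarrow> real) \<times> 'a) list" where ps: "\<forall>q\<in>set ps. bounded_linear (fst q)" "\<And>x. x - hsum ps x \<in> Y"
    using fc_proj[OF F(1) sY cY F(2)] by blast
  define S where "S = sum_list (map (\<lambda>q. norm (snd q)) ps)"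
  have S0: "S \<ge> 0" unfolding S_def by (induction ps) auto
  define e where "e = \<eta> / (1 + S)"
  have e: "e > 0" unfolding e_def using eta S0 by simp
  have "\<And>\<phi> k. \<phi> \<in> set (map fst ps) \<Longrightarrow> \<bar>\<phi> (t k)\<bar> \<le> onorm \<phi>"
  proof -
    fix \<phi> k assume "\<phi> \<in> set (map fst ps)"
    then have bl: "bounded_linear \<phi>" using ps(1) by auto
    have "\<bar>\<phi> (t k)\<bar> \<le> onorm \<phi> * norm (t k)" using onorm[OF bl, of "t k"] unfolding real_norm_def .
    also have "\<dots> \<le> onorm \<phi> * 1" using t onorm_pos_le[OF bl] by (intro mult_left_mono) auto
    finally show "\<bar>\<phi> (t k)\<bar> \<le> onorm \<phi>" by simp
  qed
  then obtain k l where kl: "k \<noteq> l" "\<forall>\<phi>\<in>set (map fst ps). \<bar>\<phi> (t k) - \<phi> (t l)\<bar> < e"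
    using pigeon_list[where bnd=onorm and phis="map fst ps" and t=t, OF _ e] by blast
  define x where "x = t k - t l"
  have "\<bar>fst q x\<bar> \<le> e" if q: "q \<in> set ps" for q
  proof -
    have bl: "bounded_linear (fst q)" using ps(1) q by auto
    have "fst q x = fst q (t k) - fst q (t l)" unfolding x_def
      by (rule linear_diff[OF bounded_linear.linear[OF bl]])
    moreover have "fst q \<in> set (map fst ps)" using q by simp
    then have "\<bar>fst q (t k) - fst q (t l)\<bar> < e" using kl(2) by blast
    ultimately show ?thesis by simp
  qed
  then have "norm (hsum ps x) \<le> e * S" unfolding S_def by (rule hsum_norm_le)
  also have "e * S \<le> \<eta>" unfolding e_def using eta S0 by (simp add: field_simps)
  finally have "norm (x - (x - hsum ps x)) \<le> \<eta>" by simp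
  then show ?thesis using kl(1) ps(2)[of x] unfolding x_def by blast
qed

lemma conv_hull_image:
  fixes f :: "'i \<Rightarrow> 'a::real_vector"
  assumes I: "finite I" and y: "y \<in> convex hull (f ` I)"
  shows "\<exists>u. (\<forall>i\<in>I. 0 \<le> u i) \<and> sum u I = 1 \<and> y = (\<Sum>i\<in>I. u i *\<^sub>R f i)"
proof -
  define R where "R = {y. \<exists>u. (\<forall>i\<in>I. 0 \<le> u i) \<and> sum u I = 1 \<and> y = (\<Sum>i\<in>I. u i *\<^sub>R f i)}"
  have "f ` I \<subseteq> R"
  proof
    fix z assume "z \<in> f ` I"
    then obtain i where i: "i \<in> I" "z = f i" by blast
    have "(\<Sum>j\<in>I. (if j = i then 1 else 0) *\<^sub>R f j) = (\<Sum>j\<in>I. if j = i then f j else 0)"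
      by (intro sum.cong) auto
    also have "\<dots> = f i" using i I by simp
    finally have e1: "(\<Sum>j\<in>I. (if j = i then 1 else 0) *\<^sub>R f j) = z" using i by simp
    have e2: "(\<Sum>j\<in>I. (if j = i then 1 else 0::real)) = 1" using i I by simp
    show "z \<in> R" unfolding R_def
      by (intro CollectI exI[of _ "\<lambda>j. if j = i then 1 else 0"] conjI) (use e1 e2 in auto)
  qed
  moreover have "convex R" unfolding convex_def
  proof (intro ballI allI impI)
    fix x z and a b :: real assume x: "x \<in> R" and z: "z \<in> R" and ab: "0 \<le> a" "0 \<le> b" "a + b = 1"
    obtain u where u: "\<forall>i\<in>I. 0 \<le> u i" "sum u I = 1" "x = (\<Sum>i\<in>I. u i *\<^sub>R f i)" using x unfolding R_def by blast
    obtain v where v: "\<forall>i\<in>I. 0 \<le> v i" "sum v I = 1" "z = (\<Sum>i\<in>I. v i *\<^sub>R f i)" using z unfolding R_def by blast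
    show "a *\<^sub>R x + b *\<^sub>R z \<in> R" unfolding R_def
    proof (intro CollectI exI[of _ "\<lambda>i. a * u i + b * v i"] conjI)
      show "\<forall>i\<in>I. 0 \<le> a * u i + b * v i" using u v ab by auto
      show "(\<Sum>i\<in>I. a * u i + b * v i) = 1" using u v ab by (simp add: sum.distrib sum_distrib_left[symmetric])
      show "a *\<^sub>R x + b *\<^sub>R z = (\<Sum>i\<in>I. (a * u i + b * v i) *\<^sub>R f i)"
        unfolding u(3) v(3) by (simp add: scaleR_sum_right sum.distrib scaleR_add_left)
    qed
  qed
  ultimately have "convex hull (f ` I) \<subseteq> R" by (rule hull_minimal)
  then show ?thesis using y unfolding R_def by blast
qed

lemma TL_add: "TL N c (x + y) = TL N c x + TL N c y"
proof transfer
  fix N c f g assume f: "Linf_rel f f" and g: "Linf_rel g g"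
  then have fL: "f \<in> Linf_fun" and gL: "g \<in> Linf_fun" unfolding Linf_rel_def by auto
  have eq: "Tf N c (\<lambda>s. f s + g s) = (\<lambda>s. Tf N c f s + Tf N c g s)"
    by (auto simp: Tf_def Phi_add[OF fL gL] distrib_left fun_eq_iff)
  show "Linf_rel (Tf N c (\<lambda>s. f s + g s)) (\<lambda>s. Tf N c f s + Tf N c g s)"
    unfolding eq Linf_rel_def using add_Linf_fun[OF Tf_Linf[OF fL] Tf_Linf[OF gL]] by auto
qed

lemma TL_scale: "TL N c (a *\<^sub>R x) = a *\<^sub>R TL N c x"
proof transfer
  fix N c a f assume f: "Linf_rel f f"
  then have fL: "f \<in> Linf_fun" unfolding Linf_rel_def by auto
  have eq: "Tf N c (\<lambda>s. a * f s) = (\<lambda>s. a * Tf N c f s)"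
    by (auto simp: Tf_def Phi_scale fun_eq_iff)
  show "Linf_rel (Tf N c (\<lambda>s. a * f s)) (\<lambda>s. a * Tf N c f s)"
    unfolding eq Linf_rel_def using scale_Linf_fun[OF Tf_Linf[OF fL]] by auto
qed

lemma TL_bounded: "norm (TL N c x) \<le> norm x * cb N c"
proof (rule TL_norm_le)
  fix p
  have "\<bar>c (p mod Suc N) * PhiL p x\<bar> = \<bar>c (p mod Suc N)\<bar> * \<bar>PhiL p x\<bar>" by (simp add: abs_mult)
  also have "\<dots> \<le> cb N c * norm x"
    by (intro mult_mono cb_bound PhiL_bound) (auto simp: cb_def)
  finally show "\<bar>c (p mod Suc N) * PhiL p x\<bar> \<le> norm x * cb N c" by (simp add: mult.commute)
qed

lemma bl_TL: "bounded_linear (TL N c)"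
  by (rule bounded_linear_intro[OF TL_add TL_scale TL_bounded])

lemma TL_cadd: "TL N (\<lambda>j. c j + d j) x = TL N c x + TL N d x"
proof transfer
  fix N c d f assume f: "Linf_rel f f"
  then have fL: "f \<in> Linf_fun" unfolding Linf_rel_def by auto
  have eq: "Tf N (\<lambda>j. c j + d j) f = (\<lambda>s. Tf N c f s + Tf N d f s)"
    by (auto simp: Tf_def distrib_right fun_eq_iff)
  show "Linf_rel (Tf N (\<lambda>j. c j + d j) f) (\<lambda>s. Tf N c f s + Tf N d f s)"
    unfolding eq Linf_rel_def using add_Linf_fun[OF Tf_Linf[OF fL] Tf_Linf[OF fL]] by auto
qed

lemma TL_cscale: "TL N (\<lambda>j. a * c j) x = a *\<^sub>R TL N c x"
proof transfer
  fix N a c f assume f: "Linf_rel f f"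
  then have fL: "f \<in> Linf_fun" unfolding Linf_rel_def by auto
  have eq: "Tf N (\<lambda>j. a * c j) f = (\<lambda>s. a * Tf N c f s)"
    by (auto simp: Tf_def fun_eq_iff)
  show "Linf_rel (Tf N (\<lambda>j. a * c j) f) (\<lambda>s. a * Tf N c f s)"
    unfolding eq Linf_rel_def using scale_Linf_fun[OF Tf_Linf[OF fL]] by auto
qed

lemma TL_czero: "TL N (\<lambda>j. 0) x = 0"
  using TL_cscale[of N 0 "\<lambda>j. 0" x] by simp

lemma TL_csum:
  assumes "finite I"
  shows "TL N (\<lambda>j. \<Sum>i\<in>I. w i * d i j) x = (\<Sum>i\<in>I. w i *\<^sub>R TL N (d i) x)"
  using assms
proof (induction I rule: finite_induct)
  case empty then show ?case using TL_czero by simp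
next
  case (insert a I)
  have "TL N (\<lambda>j. \<Sum>i\<in>insert a I. w i * d i j) x = TL N (\<lambda>j. w a * d a j + (\<Sum>i\<in>I. w i * d i j)) x"
    using insert by simp
  also have "\<dots> = w a *\<^sub>R TL N (d a) x + TL N (\<lambda>j. \<Sum>i\<in>I. w i * d i j) x"
    by (simp add: TL_cadd TL_cscale)
  finally show ?case using insert by simp
qed

definition Bop :: "nat \<Rightarrow> (nat \<Rightarrow> real) \<Rightarrow> Linf01 \<Rightarrow>\<^sub>L Linf01" where
  "Bop N c = Blinfun (TL N c)"

lemma Bop_apply[simp]: "blinfun_apply (Bop N c) = TL N c"
  unfolding Bop_def by (rule bounded_linear_Blinfun_apply[OF bl_TL])

lift_definition gL :: "nat \<Rightarrow> Linf01" is gf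
  by (simp add: Linf_rel_def gf_Linf)

lemma PhiL_gL: "PhiL q (gL p) = (if p = q then 1/2 else 0)"
proof -
  have "PhiL q (gL p) = Phi q (gf p)" by transfer simp
  also have "\<dots> = (if p = q then 1/2 else 0)" unfolding Phi_def by (rule gf_orth)
  finally show ?thesis .
qed

lemma norm_gL: "norm (gL p) \<le> 1"
  by transfer (intro Linf_norm_le gf_Linf, simp add: gf_bound)

lemma coef_sum:
  fixes J :: "nat set"
  assumes "finite J"
  shows "(\<Sum>j\<in>J. w j * (if m = j then a else 0)) = (if m \<in> J then w m * a else (0::real))"
proof -
  have "(\<Sum>j\<in>J. w j * (if m = j then a else 0)) = (\<Sum>j\<in>J. if j = m then w m * a else 0)"
    by (intro sum.cong) auto
  also have "\<dots> = (if m \<in> J then w m * a else 0)" using assms by simp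
  finally show ?thesis .
qed

theorem proposition5p39:
  shows "\<not> UALS TYPE(Linf01)"
proof
  assume "UALS TYPE(Linf01)"
  then obtain C :: real where C: "C > 0" and H: "\<forall>(W :: (Linf01 \<Rightarrow>\<^sub>L Linf01) set) (A :: Linf01 \<Rightarrow>\<^sub>L Linf01) (\<epsilon>::real).
        convex W \<and> compact W \<and> \<epsilon> > 0 \<and>
        (\<forall>x. norm x \<le> 1 \<longrightarrow> (\<exists>B\<in>W. norm (blinfun_apply A x - blinfun_apply B x) \<le> \<epsilon>))
        \<longrightarrow> (\<exists>Y. \<exists>B\<in>W. closed_finite_codim_subspace Y \<and>
               (\<forall>y\<in>Y. norm (blinfun_apply (A - B) y) \<le> C * \<epsilon> * norm y))"
    unfolding UALS_def by blast
  define K :: real where "K = 20 * (C + 1)"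
  define M :: nat where "M = nat \<lceil>K\<^sup>2\<rceil>"
  define n where "n = 2 * M"
  define N where "N = n - 1"
  have K20: "K \<ge> 20" unfolding K_def using C by simp
  have MK: "K\<^sup>2 \<le> real M" unfolding M_def by (rule real_nat_ceiling_ge)
  have K2: "1 \<le> K\<^sup>2" using K20 by (smt (verit) one_le_power)
  have M1: "M \<ge> 1" using MK K2 by linarith
  have Mpos: "real M > 0" using M1 by simp
  have n0: "n > 0" unfolding n_def using M1 by simp
  have nN: "Suc N = n" unfolding N_def using n0 by simp
  define e where "e j = (\<lambda>m. if m = j then K * real M else 0)" for j :: nat
  define Bj where "Bj j = Bop N (e j)" for j
  define A where "A = Bop N (\<lambda>_. K)"
  define W where "W = convex hull (Bj ` {..<n})"
  have cW: "convex W" unfolding W_def by (rule convex_convex_hull)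
  have kW: "compact W" unfolding W_def
    by (rule finite_imp_compact_convex_hull) simp
  have key: "blinfun_apply (A - (\<Sum>j\<in>J. w j *\<^sub>R Bj j)) x =
      TL N (\<lambda>m. K + (-1) * (if m \<in> J then w m * (K * real M) else 0)) x" if J: "finite J" for J w x
  proof -
    have "blinfun_apply (A - (\<Sum>j\<in>J. w j *\<^sub>R Bj j)) x = A x - (\<Sum>j\<in>J. w j *\<^sub>R Bj j x)"
      by (simp add: blinfun.diff_left blinfun.sum_left blinfun.scaleR_left)
    also have "(\<Sum>j\<in>J. w j *\<^sub>R Bj j x) = TL N (\<lambda>m. \<Sum>j\<in>J. w j * e j m) x"
      unfolding Bj_def Bop_apply using TL_csum[OF J, of N w e x] by simp
    also have "(\<lambda>m. \<Sum>j\<in>J. w j * e j m) = (\<lambda>m. if m \<in> J then w m * (K * real M) else 0)"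
      unfolding e_def using coef_sum[OF J] by (simp add: fun_eq_iff)
    also have "A x - TL N (\<lambda>m. if m \<in> J then w m * (K * real M) else 0) x =
        TL N (\<lambda>m. K + (-1) * (if m \<in> J then w m * (K * real M) else 0)) x"
      unfolding A_def Bop_apply TL_cadd TL_cscale by simp
    finally show ?thesis .
  qed
  have hyp: "\<forall>x. norm x \<le> 1 \<longrightarrow> (\<exists>B\<in>W. norm (blinfun_apply A x - blinfun_apply B x) \<le> 1)"
  proof (intro allI impI)
    fix x :: Linf01 assume nx: "norm x \<le> 1"
    define S where "S = {i \<in> {..<n}. \<exists>p. p mod n = i \<and> 1 / K < \<bar>PhiL p x\<bar>}"
    have finS: "finite S" unfolding S_def by simp
    define pick where "pick i = (SOME p. p mod n = i \<and> 1 / K < \<bar>PhiL p x\<bar>)" for i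
    have pk: "pick i mod n = i \<and> 1 / K < \<bar>PhiL (pick i) x\<bar>" if iS: "i \<in> S" for i
    proof -
      obtain p where "p mod n = i \<and> 1 / K < \<bar>PhiL p x\<bar>" using iS unfolding S_def by auto
      then show ?thesis unfolding pick_def by (rule someI)
    qed
    have inj: "inj_on pick S"
    proof (rule inj_onI)
      fix i j assume "i \<in> S" "j \<in> S" "pick i = pick j"
      then show "i = j" using pk by metis
    qed
    have "real (card S) * (1 / K)\<^sup>2 = (\<Sum>i\<in>S. (1 / K)\<^sup>2)" by simp
    also have "\<dots> \<le> (\<Sum>i\<in>S. (PhiL (pick i) x)\<^sup>2)"
    proof (rule sum_mono)
      fix i assume "i \<in> S"
      then have "1 / K < \<bar>PhiL (pick i) x\<bar>" using pk by blast
      moreover have "0 \<le> 1 / K" using K20 by simp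
      ultimately have "(1 / K)\<^sup>2 \<le> \<bar>PhiL (pick i) x\<bar>\<^sup>2" by (intro power_mono) auto
      then show "(1 / K)\<^sup>2 \<le> (PhiL (pick i) x)\<^sup>2" by simp
    qed
    also have "\<dots> = (\<Sum>p\<in>pick ` S. (PhiL p x)\<^sup>2)" by (simp add: sum.reindex[OF inj])
    also have "\<dots> \<le> (norm x)\<^sup>2 / 2" by (rule Bessel_L) (use finS in simp)
    also have "\<dots> \<le> 1 / 2" using nx by (simp add: power_le_one)
    finally have "real (card S) * (1 / K)\<^sup>2 \<le> 1 / 2" .
    then have "real (card S) \<le> K\<^sup>2 / 2" using K20 by (simp add: field_simps power2_eq_square)
    then have cardS: "card S \<le> M" using MK K2 by linarith
    have Ssub: "S \<subseteq> {..<n}" unfolding S_def by auto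
    have "card ({..<n} - S) = n - card S" using Ssub by (simp add: card_Diff_subset finS)
    then have "M - card S \<le> card ({..<n} - S)" unfolding n_def using cardS by simp
    then obtain T' where T': "T' \<subseteq> {..<n} - S" "card T' = M - card S"
      using obtain_subset_with_card_n by metis
    define T where "T = S \<union> T'"
    have finT': "finite T'" using T'(1) finite_subset by blast
    have finT: "finite T" unfolding T_def using finS finT' by simp
    have cardT: "card T = M" unfolding T_def using T' cardS finS finT'
      by (subst card_Un_disjoint) auto
    have Tsub: "T \<subseteq> {..<n}" unfolding T_def using Ssub T'(1) by auto
    define B where "B = (\<Sum>j\<in>T. (1 / real M) *\<^sub>R Bj j)"
    have BW: "B \<in> W" unfolding B_def W_def
    proof (rule convex_sum[OF finT convex_convex_hull])
      show "(\<Sum>i\<in>T. 1 / real M) = 1" using cardT Mpos by simp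
      show "\<And>i. i \<in> T \<Longrightarrow> 0 \<le> 1 / real M" by simp
      show "\<And>i. i \<in> T \<Longrightarrow> Bj i \<in> convex hull (Bj ` {..<n})"
        using Tsub by (intro hull_inc imageI) auto
    qed
    have "blinfun_apply A x - blinfun_apply B x = blinfun_apply (A - B) x" by (simp add: blinfun.diff_left)
    also have "\<dots> = TL N (\<lambda>m. K + (-1) * (if m \<in> T then 1 / real M * (K * real M) else 0)) x"
      unfolding B_def by (rule key[OF finT])
    finally have eqx: "blinfun_apply A x - blinfun_apply B x = TL N (\<lambda>m. K + (-1) * (if m \<in> T then 1 / real M * (K * real M) else 0)) x" .
    have "norm (TL N (\<lambda>m. K + (-1) * (if m \<in> T then 1 / real M * (K * real M) else 0)) x) \<le> 1"
    proof (rule TL_norm_le)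
      fix p
      define m where "m = p mod Suc N"
      show "\<bar>(K + (-1) * (if p mod Suc N \<in> T then 1 / real M * (K * real M) else 0)) * PhiL p x\<bar> \<le> 1"
      proof (cases "m \<in> T")
        case True
        then show ?thesis unfolding m_def using Mpos by simp
      next
        case False
        then have "m \<notin> S" unfolding T_def by auto
        moreover have "m < n" unfolding m_def using nN by auto
        moreover have "p mod n = m" unfolding m_def nN ..
        ultimately have "\<bar>PhiL p x\<bar> \<le> 1 / K" unfolding S_def by auto
        then have "K * \<bar>PhiL p x\<bar> \<le> K * (1 / K)" using K20 by (intro mult_left_mono) auto
        then show ?thesis using False K20 unfolding m_def by (simp add: abs_mult)
      qed
    qed
    then have "norm (blinfun_apply A x - blinfun_apply B x) \<le> 1" by (subst eqx)
    then show "\<exists>B\<in>W. norm (blinfun_apply A x - blinfun_apply B x) \<le> 1" using BW by blast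
  qed
  have "\<exists>Y. \<exists>B\<in>W. closed_finite_codim_subspace Y \<and> (\<forall>y\<in>Y. norm (blinfun_apply (A - B) y) \<le> C * 1 * norm y)"
    by (rule H[rule_format]) (intro conjI cW kW hyp zero_less_one)
  then obtain Y B where BW: "B \<in> W" and Yc: "closed_finite_codim_subspace Y"
    and bnd: "\<And>y. y \<in> Y \<Longrightarrow> norm (blinfun_apply (A - B) y) \<le> C * 1 * norm y"
    by blast
  obtain u where u: "\<forall>i\<in>{..<n}. 0 \<le> u i" "sum u {..<n} = 1" "B = (\<Sum>i\<in>{..<n}. u i *\<^sub>R Bj i)"
    using conv_hull_image[OF _ BW[unfolded W_def]] by blast
  obtain i where i: "i < n" "u i \<le> 1 / real n"
  proof (rule ccontr)
    assume "\<not> thesis"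
    then have gt: "\<And>i. i < n \<Longrightarrow> 1 / real n < u i" using that by (meson not_le)
    have "(\<Sum>i\<in>{..<n}. 1 / real n) < sum u {..<n}"
      using n0 by (intro sum_strict_mono) (auto intro: gt)
    then show False using u(2) n0 by simp
  qed
  define c' where "c' = (\<lambda>m. K + (-1) * (if m \<in> {..<n} then u m * (K * real M) else 0))"
  have ABy: "blinfun_apply (A - B) y = TL N c' y" for y
    unfolding u(3) c'_def by (rule key) simp
  have ci: "c' i \<ge> K / 2"
  proof -
    have "u i * (K * real M) \<le> (1 / real n) * (K * real M)"
      using i(2) K20 Mpos by (intro mult_right_mono) auto
    also have "\<dots> = K / 2" unfolding n_def using Mpos by (simp add: field_simps)
    finally show ?thesis unfolding c'_def using i(1) by simp
  qed
  define t where "t k = gL ((k + 1) * n + i)" for k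
  obtain k l y0 where kl: "k \<noteq> l" and y0: "y0 \<in> Y" "norm (t k - t l - y0) \<le> 1 / 4"
    using fc_pair[OF Yc, of t "1/4"] norm_gL unfolding t_def by force
  define p where "p = (k + 1) * n + i"
  have pmod: "p mod Suc N = i" unfolding p_def nN using i(1) by (metis mod_less mod_mult_self3)
  have p1: "p \<ge> 1" unfolding p_def using n0 by simp
  have Pk: "PhiL p (t k) = 1 / 2" unfolding t_def p_def by (simp add: PhiL_gL)
  have "(l + 1) * n + i \<noteq> (k + 1) * n + i" using kl n0 by simp
  then have Pl: "PhiL p (t l) = 0" unfolding t_def p_def by (simp add: PhiL_gL)
  have y0eq: "y0 = (t k - t l) - (t k - t l - y0)" by simp
  have "PhiL p y0 = PhiL p (t k) - PhiL p (t l) - PhiL p (t k - t l - y0)"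
    by (subst y0eq) (simp add: PhiL_diff)
  moreover have "\<bar>PhiL p (t k - t l - y0)\<bar> \<le> 1 / 4"
    using PhiL_bound[of p "t k - t l - y0"] y0(2) by simp
  ultimately have Py0: "PhiL p y0 \<ge> 1 / 4" using Pk Pl by simp
  have "norm y0 \<le> norm (t k - t l) + norm (t k - t l - y0)"
    by (subst y0eq) (rule norm_triangle_ineq4)
  moreover have "norm (t k - t l) \<le> 2"
    using norm_triangle_ineq4[of "t k" "t l"] norm_gL unfolding t_def by (smt (verit))
  ultimately have ny0: "norm y0 \<le> 9 / 4" using y0(2) by simp
  have "\<bar>c' (p mod Suc N) * PhiL p y0\<bar> \<le> norm (TL N c' y0)" by (rule TL_norm_ge[OF p1])
  moreover have "K / 2 * (1 / 4) \<le> \<bar>c' (p mod Suc N) * PhiL p y0\<bar>"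
  proof -
    have "K / 2 * (1 / 4) \<le> c' i * PhiL p y0"
      using ci Py0 K20 by (intro mult_mono) auto
    then show ?thesis unfolding pmod by simp
  qed
  moreover have "norm (TL N c' y0) \<le> C * 1 * norm y0" using bnd[OF y0(1)] ABy by simp
  moreover have "C * 1 * norm y0 \<le> C * (9 / 4)" using ny0 C by simp
  ultimately have "K / 8 \<le> C * (9 / 4)" by simp
  then show False unfolding K_def using C by simp
qed

end
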